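(* For every positive integer $n$, $C_S(y^n x^n) = K[y^n x^n]$.
   Context: Standing conventions: $K$ is a field, $R = K[y]$, $\sigma$ is a $K$-algebra endomorphism of $R$ with $\deg_y(\sigma(y)) > 1$, and $\delta$ is a $K$-linear $\sigma$-derivation of $R$ ($\delta(ab) = \sigma(a)\delta(b) + \delta(a)b$). $S = R[x;\sigma,\delta]$ is the Ore extension (polynomials $\sum r_i x^i$, $r_i\in R$, with $xr = \sigma(r)x + \delta(r)$). $C_S(P)$ is the centralizer of $P$ in $S$, and $K[P] = \{\sum_i c_i P^i : c_i \in K\}$. *)

theory Defs
  imports "HOL-Computational_Algebra.Polynomial"
begin

text \<open>Ore extension S = R[x; sigma, delta] with R = K[y].
  An element sum_i r_i x^i (coefficients written on the left) is represented as
  an 'a poly poly P with coeff P i = r_i.\<close>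

definition ore_xmul :: "('a::field poly \<Rightarrow> 'a poly) \<Rightarrow> ('a poly \<Rightarrow> 'a poly)
    \<Rightarrow> 'a poly poly \<Rightarrow> 'a poly poly" where
  "ore_xmul \<sigma> \<delta> Q = pCons 0 (map_poly \<sigma> Q) + map_poly \<delta> Q"

definition ore_mult :: "('a::field poly \<Rightarrow> 'a poly) \<Rightarrow> ('a poly \<Rightarrow> 'a poly)
    \<Rightarrow> 'a poly poly \<Rightarrow> 'a poly poly \<Rightarrow> 'a poly poly" where
  "ore_mult \<sigma> \<delta> P Q = (\<Sum>i\<le>degree P. smult (coeff P i) ((ore_xmul \<sigma> \<delta> ^^ i) Q))"

definition ore_pow :: "('a::field poly \<Rightarrow> 'a poly) \<Rightarrow> ('a poly \<Rightarrow> 'a poly)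
    \<Rightarrow> 'a poly poly \<Rightarrow> nat \<Rightarrow> 'a poly poly" where
  "ore_pow \<sigma> \<delta> P k = (ore_mult \<sigma> \<delta> P ^^ k) 1"

definition ore_centralizer :: "('a::field poly \<Rightarrow> 'a poly) \<Rightarrow> ('a poly \<Rightarrow> 'a poly)
    \<Rightarrow> 'a poly poly \<Rightarrow> 'a poly poly set" where
  "ore_centralizer \<sigma> \<delta> P = {Q. ore_mult \<sigma> \<delta> P Q = ore_mult \<sigma> \<delta> Q P}"

definition ore_Kalg :: "('a::field poly \<Rightarrow> 'a poly) \<Rightarrow> ('a poly \<Rightarrow> 'a poly)
    \<Rightarrow> 'a poly poly \<Rightarrow> 'a poly poly set" where
  "ore_Kalg \<sigma> \<delta> P = {Q. \<exists>(c::nat \<Rightarrow> 'a) m. Q = (\<Sum>i\<le>m. smult [:c i:] (ore_pow \<sigma> \<delta> P i))}"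

end

theory Submission
  imports Defs
begin


lemma pow_ge_lin: "(2::nat) * g \<le> 2 ^ g"
proof (induct g)
  case 0 then show ?case by simp
next
  case (Suc g)
  show ?case
  proof (cases "g = 0")
    case True then show ?thesis by simp
  next
    case False
    then have "(2::nat) ^ 1 \<le> 2 ^ g" by (intro power_increasing) auto
    then show ?thesis using Suc by simp
  qed
qed

lemma geo_bound:
  fixes u :: int and k :: nat
  assumes "u \<ge> 1" "k \<ge> 1"
  shows "(u - 1) * (1 + (int k - 1) * u) \<le> u ^ k - 1"
  using assms(2)
proof (induct k rule: dec_induct)
  case base then show ?case by simp
next
  case (step k)
  have h1: "u * ((u - 1) * (1 + (int k - 1) * u)) \<le> u * (u ^ k - 1)"
    using step(3) assms(1) by (intro mult_left_mono) auto
  have h2: "(int k - 1) * u \<le> (int k - 1) * (u * u)"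
    using step(1) assms(1) by (intro mult_left_mono) (auto simp: mult_le_cancel_left1)
  have h3: "(u - 1) * (1 + (int k - 1) * u) \<le> (u - 1) * (1 + (int k - 1) * (u*u))"
    using h2 assms(1) by (intro mult_left_mono) auto
  have "(u - 1) * (1 + (int (Suc k) - 1) * u) = (u - 1) * (1 + int k * u)" by simp
  also have "\<dots> \<le> u * ((u - 1) * (1 + (int k - 1) * u)) + (u - 1)"
  proof -
    have "u * ((u - 1) * (1 + (int k - 1) * u)) + (u - 1) = (u - 1) * (u + (int k - 1) * (u * u) + 1)"
      by (simp add: algebra_simps)
    moreover have "(u - 1) * (1 + int k * u) \<le> (u - 1) * (u + (int k - 1) * (u * u) + 1)"
      using h2 assms(1) by (intro mult_left_mono) (auto simp: algebra_simps)
    ultimately show ?thesis by simp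
  qed
  also have "\<dots> \<le> u * (u ^ k - 1) + (u - 1)" using h1 by simp
  also have "\<dots> = u ^ Suc k - 1" by (simp add: algebra_simps)
  finally show ?case .
qed

lemma size_lemma:
  fixes d g n :: nat
  assumes d: "d \<ge> 2" and g: "g dvd n" "0 < g" "g < n"
  shows "n * (d ^ g - 1) < d ^ n - 1"
proof -
  obtain k where nk: "n = g * k" using g by (auto elim: dvdE)
  have k2: "k \<ge> 2" using nk g by (cases k; cases "k - 1") auto
  define u :: int where "u = int d ^ g"
  have u2g: "u \<ge> 2 * int g"
  proof -
    have "2 * g \<le> 2 ^ g" by (rule pow_ge_lin)
    also have "(2::nat) ^ g \<le> d ^ g" using d by (simp add: power_mono)
    finally show ?thesis unfolding u_def by (metis of_nat_le_iff of_nat_mult of_nat_numeral of_nat_power)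
  qed
  have u1: "u \<ge> 2" using u2g g(2) by linarith
  have dn: "int d ^ n = u ^ k" unfolding u_def nk by (simp add: power_mult)
  have A: "(u - 1) * (1 + (int k - 1) * u) \<le> u ^ k - 1" using geo_bound[of u k] u1 k2 by simp
  have B: "int g * int k < 1 + (int k - 1) * u"
  proof -
    have "(int k - 1) * (2 * int g) \<le> (int k - 1) * u" using u2g k2 by (intro mult_left_mono) auto
    moreover have "int g * int k \<le> (int k - 1) * (2 * int g)" using k2 g(2) by (simp add: algebra_simps)
    ultimately show ?thesis by linarith
  qed
  have C: "(u - 1) * (int g * int k) < (u - 1) * (1 + (int k - 1) * u)"
    using B u1 by (intro mult_strict_left_mono) auto
  have "int (n * (d ^ g - 1)) = (u - 1) * (int g * int k)"
    unfolding u_def nk using d by (simp add: of_nat_diff algebra_simps)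
  also have "\<dots> < u ^ k - 1" using A C by linarith
  also have "\<dots> = int (d ^ n - 1)" using d dn by (simp add: of_nat_diff)
  finally show ?thesis by (simp only: of_nat_less_iff)
qed

definition "Tset d n a \<longleftrightarrow> (d ^ n - 1) dvd n * (d ^ a - (1::nat))"

lemma T_split:
  fixes d :: nat assumes "d \<ge> 1"
  shows "n * (d ^ (a + b) - 1) = d ^ a * (n * (d ^ b - 1)) + n * (d ^ a - 1)"
proof -
  have "int (n * (d ^ (a + b) - 1)) = int (d ^ a * (n * (d ^ b - 1)) + n * (d ^ a - 1))"
    using assms by (simp add: of_nat_diff power_add algebra_simps)
  then show ?thesis by (simp only: of_nat_eq_iff)
qed

lemma T_add: "d \<ge> 1 \<Longrightarrow> Tset d n a \<Longrightarrow> Tset d n b \<Longrightarrow> Tset d n (a + b)"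
  unfolding Tset_def T_split by simp

lemma T_sub: "d \<ge> 1 \<Longrightarrow> Tset d n a \<Longrightarrow> Tset d n b \<Longrightarrow> b \<le> a \<Longrightarrow> Tset d n (a - b)"
  unfolding Tset_def using T_split[of d n "a - b" b]
  by (metis dvd_add_right_iff dvd_mult le_add_diff_inverse2)

lemma T_n: "Tset d n n" unfolding Tset_def by simp

lemma T_mult: "d \<ge> 1 \<Longrightarrow> Tset d n g \<Longrightarrow> Tset d n (g * k)"
proof (induct k)
  case 0 then show ?case by (simp add: Tset_def)
next
  case (Suc k) then show ?case using T_add[of d n "g * k" g] by (simp add: add.commute)
qed

lemma T_mod: "d \<ge> 1 \<Longrightarrow> Tset d n a \<Longrightarrow> Tset d n g \<Longrightarrow> Tset d n (a mod g)"
proof -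
  assume a: "d \<ge> 1" "Tset d n a" "Tset d n g"
  have le: "g * (a div g) \<le> a" by (rule times_div_less_eq_dividend)
  have "a - g * (a div g) = a mod g" by (metis minus_div_mult_eq_mod mult.commute)
  then show ?thesis using T_sub[OF a(1) a(2) T_mult[OF a(1) a(3)] le] by simp
qed

lemma nt_main:
  fixes d n m :: nat
  assumes d: "d \<ge> 2" and n: "n > 0" and T: "(d ^ n - 1) dvd n * (d ^ m - 1)"
  shows "n dvd m"
proof (rule ccontr)
  assume nd: "\<not> n dvd m"
  have d1: "d \<ge> 1" using d by simp
  define r where "r = m mod n"
  have r: "0 < r" "r < n" using nd n unfolding r_def by (auto simp: dvd_eq_mod_eq_0)
  have Tr: "Tset d n r" unfolding r_def using T_mod[OF d1, of n m n] T T_n by (simp add: Tset_def)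
  define g where "g = (LEAST x. 0 < x \<and> Tset d n x)"
  have gP: "0 < g \<and> Tset d n g" unfolding g_def by (rule LeastI[of _ r]) (use r Tr in auto)
  have gr: "g \<le> r" unfolding g_def by (rule Least_le) (use r Tr in auto)
  have "Tset d n (n mod g)" using T_mod[OF d1 T_n gP[THEN conjunct2]] .
  moreover have "n mod g < g" using gP by simp
  ultimately have "\<not> (0 < n mod g)" using not_less_Least[of "n mod g" "\<lambda>x. 0 < x \<and> Tset d n x"]
    unfolding g_def[symmetric] by auto
  then have gd: "g dvd n" by (simp add: mod_eq_0_iff_dvd)
  have pos: "n * (d ^ g - 1) > 0"
  proof -
    have "d ^ g \<ge> d ^ 1" using gP d by (intro power_increasing) auto
    then show ?thesis using n d by simp
  qed
  have "d ^ n - 1 \<le> n * (d ^ g - 1)"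
    using gP pos by (intro dvd_imp_le) (auto simp: Tset_def)
  moreover have "n * (d ^ g - 1) < d ^ n - 1"
    using size_lemma[OF d gd] gP gr r by simp
  ultimately show False by simp
qed




locale ore =
  fixes \<sigma> \<delta> :: "'a::field poly \<Rightarrow> 'a poly"
  assumes sigma_add: "\<And>a b. \<sigma> (a + b) = \<sigma> a + \<sigma> b"
      and sigma_mult: "\<And>a b. \<sigma> (a * b) = \<sigma> a * \<sigma> b"
      and sigma_one: "\<sigma> 1 = 1"
      and sigma_smult: "\<And>c a. \<sigma> (smult c a) = smult c (\<sigma> a)"
      and sigma_deg: "degree (\<sigma> [:0, 1:]) > 1"
      and delta_add: "\<And>a b. \<delta> (a + b) = \<delta> a + \<delta> b"
      and delta_smult: "\<And>c a. \<delta> (smult c a) = smult c (\<delta> a)"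
      and delta_mult: "\<And>a b. \<delta> (a * b) = \<sigma> a * \<delta> b + \<delta> a * b"
begin

abbreviation X where "X \<equiv> ore_xmul \<sigma> \<delta>"
abbreviation M where "M \<equiv> ore_mult \<sigma> \<delta>"

lemma sigma0[simp]: "\<sigma> 0 = 0"
  using sigma_add[of 0 0] by (metis add_cancel_right_right add_0)
lemma delta0[simp]: "\<delta> 0 = 0"
  using delta_add[of 0 0] by (metis add_cancel_right_right add_0)
lemma delta1[simp]: "\<delta> 1 = 0"
  proof -
  have "\<delta> 1 = \<delta> 1 + \<delta> 1" using delta_mult[of 1 1] sigma_one by simp
  then show ?thesis by (metis add_cancel_right_right)
qed
lemma sigma_const[simp]: "\<sigma> [:c:] = [:c:]"
  using sigma_smult[of c 1] by (simp add: sigma_one)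
lemma delta_const[simp]: "\<delta> [:c:] = 0"
  using delta_smult[of c 1] by simp

lemma X_add: "X (A + B) = X A + X B"
  unfolding ore_xmul_def
  by (intro poly_eqI) (simp add: coeff_map_poly coeff_pCons sigma_add delta_add split: nat.splits)

lemma X_0[simp]: "X 0 = 0"
  unfolding ore_xmul_def by simp

lemma X_smult: "X (smult r B) = smult (\<sigma> r) (X B) + smult (\<delta> r) B"
  unfolding ore_xmul_def
  by (intro poly_eqI) (simp add: coeff_map_poly coeff_pCons sigma_mult delta_mult algebra_simps split: nat.splits)

lemma X_pCons: "X (pCons b B) = pCons (\<delta> b) (pCons (\<sigma> b) (map_poly \<sigma> B) + map_poly \<delta> B)"
  unfolding ore_xmul_def by (simp add: map_poly_pCons)

lemma M_0_left[simp]: "M 0 B = 0"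
  unfolding ore_mult_def by simp

lemma M_pCons: "M (pCons a A) B = smult a B + M A (X B)"
proof -
  have alt: "M P Q = (\<Sum>i\<le>N. smult (coeff P i) ((X ^^ i) Q))" if "degree P \<le> N" for P Q N
    unfolding ore_mult_def
    by (rule sum.mono_neutral_left) (use that in \<open>auto simp: not_le intro!: coeff_eq_0\<close>)
  have "M (pCons a A) B = (\<Sum>i\<le>Suc (degree A). smult (coeff (pCons a A) i) ((X ^^ i) B))"
    by (rule alt) (simp add: degree_pCons_le)
  also have "\<dots> = smult a B + (\<Sum>i\<le>degree A. smult (coeff A i) ((X ^^ i) (X B)))"
    by (subst sum.atMost_Suc_shift) (simp add: funpow_Suc_right del: funpow.simps)
  also have "(\<Sum>i\<le>degree A. smult (coeff A i) ((X ^^ i) (X B))) = M A (X B)"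
    by (simp add: ore_mult_def)
  finally show ?thesis .
qed


lemma M_add_left: "M (A + A') B = M A B + M A' B"
proof (induct A arbitrary: A' B)
  case 0 then show ?case by simp
next
  case (pCons a A)
  obtain a' A'' where A': "A' = pCons a' A''" by (cases A') auto
  show ?case using pCons(2)[of A'' "X B"]
    by (simp add: A' M_pCons smult_add_left algebra_simps)
qed

lemma M_add_right: "M A (B + B') = M A B + M A B'"
  by (induct A arbitrary: B B') (simp_all add: M_pCons X_add smult_add_right algebra_simps)

lemma M_0_right[simp]: "M A 0 = 0"
  by (induct A) (simp_all add: M_pCons)

lemma M_smult_left: "M (smult a A) B = smult a (M A B)"
  by (induct A arbitrary: B) (simp_all add: M_pCons smult_add_right)

lemma M_1_left[simp]: "M 1 B = B"
  using M_pCons[of 1 0 B, folded one_pCons] by simp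

lemma X_via: "X B = pCons 0 (map_poly \<sigma> B) + map_poly \<delta> B"
  unfolding ore_xmul_def ..

lemma M_X_comm: "X (M B C) = M (X B) C"
proof (induct B arbitrary: C)
  case 0 then show ?case by simp
next
  case (pCons b B)
  have "X (M (pCons b B) C) = X (smult b C) + X (M B (X C))"
    by (simp add: M_pCons X_add)
  also have "\<dots> = smult (\<sigma> b) (X C) + smult (\<delta> b) C + M (X B) (X C)"
    by (simp add: X_smult pCons)
  also have "M (X B) (X C) = M (map_poly \<sigma> B) (X (X C)) + M (map_poly \<delta> B) (X C)"
    by (simp add: X_via[of B] M_add_left M_pCons)
  finally have L: "X (M (pCons b B) C) = smult (\<sigma> b) (X C) + smult (\<delta> b) C
     + (M (map_poly \<sigma> B) (X (X C)) + M (map_poly \<delta> B) (X C))" .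
  have R: "M (X (pCons b B)) C = smult (\<delta> b) C + (smult (\<sigma> b) (X C) + M (map_poly \<sigma> B) (X (X C)) + M (map_poly \<delta> B) (X C))"
    by (simp add: X_pCons M_pCons M_add_left)
  show ?case unfolding L R by (simp add: algebra_simps)
qed

lemma M_assoc: "M (M A B) C = M A (M B C)"
proof (induct A arbitrary: B)
  case 0 then show ?case by simp
next
  case (pCons a A)
  show ?case
    by (simp add: M_pCons M_add_left M_smult_left pCons M_X_comm)
qed

lemma X_smult_const: "X (smult [:c:] B) = smult [:c:] (X B)"
  by (simp add: X_smult)

lemma M_smult_const_right: "M A (smult [:c:] B) = smult [:c:] (M A B)"
  by (induct A arbitrary: B) (simp_all add: M_pCons X_smult_const smult_add_right mult.commute)

lemma M_diff_left: "M (A - A') B = M A B - M A' B"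
  using M_add_left[of "A - A'" A' B] by (simp add: algebra_simps)

lemma M_diff_right: "M A (B - B') = M A B - M A B'"
  using M_add_right[of A "B - B'" B'] by (simp add: algebra_simps)

lemma M_sum_left: "M (\<Sum>i\<in>I. f i) B = (\<Sum>i\<in>I. M (f i) B)"
  by (induct I rule: infinite_finite_induct) (simp_all add: M_add_left)

lemma M_sum_right: "M A (\<Sum>i\<in>I. f i) = (\<Sum>i\<in>I. M A (f i))"
  by (induct I rule: infinite_finite_induct) (simp_all add: M_add_right)

lemma X_monom: "X (monom 1 j) = monom 1 (Suc j)"
  by (simp add: X_via map_poly_monom sigma_one monom_Suc)

lemma M_monom_right: "M A (monom 1 j) = A * monom 1 j"
proof (induct A arbitrary: j)
  case 0 then show ?case by simp
next
  case (pCons a A)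
  have "M (pCons a A) (monom 1 j) = smult a (monom 1 j) + A * monom 1 (Suc j)"
    by (simp add: M_pCons X_monom pCons)
  then show ?case by (simp add: monom_Suc)
qed

lemma M_1_right[simp]: "M A 1 = A"
  using M_monom_right[of A 0] by (simp add: monom_0 one_pCons[symmetric])


definition "tt = \<sigma> [:0, 1:]"

lemma sigma_pcomp: "\<sigma> f = pcompose f tt"
proof (induct f)
  case 0 then show ?case by simp
next
  case (pCons a p)
  have "pCons a p = [:a:] + [:0, 1:] * p" by simp
  then have "\<sigma> (pCons a p) = [:a:] + tt * \<sigma> p"
    by (metis sigma_add sigma_mult sigma_const tt_def)
  then show ?case by (simp add: pcompose_pCons pCons)
qed

lemma deg_tt: "degree tt > 1" using sigma_deg tt_def by simp

lemma degree_sigma: "degree (\<sigma> f) = degree f * degree tt"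
  by (simp add: sigma_pcomp degree_pcompose)

lemma sigma_nz: "f \<noteq> 0 \<Longrightarrow> \<sigma> f \<noteq> 0"
proof
  assume f: "f \<noteq> 0" and "\<sigma> f = 0"
  then have "pcompose f tt = 0" by (simp add: sigma_pcomp)
  moreover have "degree tt > 0" using deg_tt by simp
  ultimately have "f = 0" by (rule pcompose_eq_0)
  with f show False by simp
qed

lemma S_add: "(\<sigma>^^k) (a + b) = (\<sigma>^^k) a + (\<sigma>^^k) b"
  by (induct k) (simp_all add: sigma_add)

lemma S_0[simp]: "(\<sigma>^^k) 0 = 0"
  by (induct k) simp_all

lemma S_diff: "(\<sigma>^^k) (a - b) = (\<sigma>^^k) a - (\<sigma>^^k) b"
  using S_add[of k "a - b" b] by (simp add: algebra_simps)

lemma S_smult: "(\<sigma>^^k) (smult c a) = smult c ((\<sigma>^^k) a)"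
  by (induct k) (simp_all add: sigma_smult)

lemma S_mult: "(\<sigma>^^k) (a * b) = (\<sigma>^^k) a * (\<sigma>^^k) b"
  by (induct k) (simp_all add: sigma_mult)

lemma S_nz: "f \<noteq> 0 \<Longrightarrow> (\<sigma>^^k) f \<noteq> 0"
  by (induct k) (simp_all add: sigma_nz)

lemma degree_S: "degree ((\<sigma>^^k) f) = degree f * degree tt ^ k"
  by (induct k) (simp_all add: degree_sigma)

lemma X_lead: assumes "B \<noteq> 0"
  shows "degree (X B) = Suc (degree B) \<and> lead_coeff (X B) = \<sigma> (lead_coeff B)"
proof -
  have nz: "\<And>x. x \<noteq> 0 \<Longrightarrow> \<sigma> x \<noteq> 0" using sigma_nz by blast
  have d1: "degree (map_poly \<sigma> B) = degree B" by (rule degree_map_poly[OF nz])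
  have l1: "lead_coeff (map_poly \<sigma> B) = \<sigma> (lead_coeff B)"
    by (rule lead_coeff_map_poly_nz) (use assms nz in auto)
  have mB: "map_poly \<sigma> B \<noteq> 0" using l1 assms nz by auto
  have d2: "degree (map_poly \<delta> B) \<le> degree B"
    by (rule degree_le) (auto simp: coeff_map_poly coeff_eq_0)
  have dp: "degree (pCons 0 (map_poly \<sigma> B)) = Suc (degree B)" using mB d1 by simp
  have lt: "degree (map_poly \<delta> B) < degree (pCons 0 (map_poly \<sigma> B))" using dp d2 by simp
  have "degree (map_poly \<delta> B + pCons 0 (map_poly \<sigma> B)) = Suc (degree B)"
    using degree_add_eq_right[OF lt] dp by simp
  moreover have "lead_coeff (map_poly \<delta> B + pCons 0 (map_poly \<sigma> B)) = \<sigma> (lead_coeff B)"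
    using lead_coeff_add_le[OF lt] l1 mB by simp
  ultimately show ?thesis unfolding X_via by (simp add: add.commute)
qed

lemma M_lead: assumes "A \<noteq> 0" "B \<noteq> 0"
  shows "degree (M A B) = degree A + degree B \<and> lead_coeff (M A B) = lead_coeff A * (\<sigma>^^(degree A)) (lead_coeff B)"
  using assms
proof (induct A arbitrary: B)
  case 0 then show ?case by simp
next
  case (pCons a A)
  show ?case
  proof (cases "A = 0")
    case True
    then have "a \<noteq> 0" using pCons by simp
    then show ?thesis using True pCons(4) by (simp add: M_pCons degree_smult_eq)
  next
    case False
    have xb: "degree (X B) = Suc (degree B)" "lead_coeff (X B) = \<sigma> (lead_coeff B)"
      using X_lead[OF pCons(4)] by auto
    have xnz: "X B \<noteq> 0" using xb by auto
    note IH = pCons(2)[OF False xnz]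
    have lt: "degree (smult a B) < degree (M A (X B))"
      using IH xb by (simp add: degree_smult_le le_less_trans)
    have D1: "degree (M (pCons a A) B) = degree (M A (X B))"
      unfolding M_pCons by (rule degree_add_eq_right[OF lt])
    have L1: "lead_coeff (M (pCons a A) B) = lead_coeff (M A (X B))"
      unfolding M_pCons by (rule lead_coeff_add_le[OF lt])
    have D3: "(\<sigma>^^degree (pCons a A)) (lead_coeff B) = (\<sigma>^^degree A) (\<sigma> (lead_coeff B))"
      using False by (simp add: funpow_Suc_right del: funpow.simps)
    have LC: "lead_coeff (pCons a A) = lead_coeff A" using False by simp
    have D2: "degree (pCons a A) = Suc (degree A)" using False by simp
    have e1: "degree (M A (X B)) = Suc (degree A + degree B)" using conjunct1[OF IH] xb(1) by simp
    have e2: "lead_coeff (M A (X B)) = lead_coeff A * (\<sigma>^^degree A) (\<sigma> (lead_coeff B))"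
      using conjunct2[OF IH] unfolding xb(2) .
    show ?thesis
      apply (rule conjI)
       apply (simp only: D1 e1 D2 add_Suc)
      apply (simp only: L1 LC D3 e2)
      done
  qed
qed

lemma M_nz: "A \<noteq> 0 \<Longrightarrow> B \<noteq> 0 \<Longrightarrow> M A B \<noteq> 0"
  using M_lead[of A B] S_nz by (metis leading_coeff_0_iff mult_eq_0_iff)


abbreviation C where "C \<equiv> ore_centralizer \<sigma> \<delta>"
abbreviation K where "K \<equiv> ore_Kalg \<sigma> \<delta>"
abbreviation pw where "pw \<equiv> ore_pow \<sigma> \<delta>"

lemma pw_0[simp]: "pw A 0 = 1" by (simp add: ore_pow_def)
lemma pw_Suc: "pw A (Suc k) = M A (pw A k)" by (simp add: ore_pow_def)

lemma pw_comm: "M (pw A k) A = pw A (Suc k)"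
proof (induct k)
  case 0 then show ?case by (simp add: pw_Suc)
next
  case (Suc k)
  have "M (pw A (Suc k)) A = M A (M (pw A k) A)" by (simp add: pw_Suc M_assoc)
  then show ?case using Suc by (simp add: pw_Suc)
qed

lemma pw_C: "pw A k \<in> C A"
  unfolding ore_centralizer_def using pw_comm[of A k] by (simp add: pw_Suc)

lemma pw_deg: "A \<noteq> 0 \<Longrightarrow> pw A k \<noteq> 0 \<and> degree (pw A k) = k * degree A"
proof (induct k)
  case 0 then show ?case by simp
next
  case (Suc k)
  then show ?case using M_lead[of A "pw A k"] M_nz[of A "pw A k"] by (simp add: pw_Suc)
qed

lemma K_sub_C: "K A \<subseteq> C A"
proof
  fix Q assume "Q \<in> K A"
  then obtain c m where Q: "Q = (\<Sum>i\<le>m. smult [:c i:] (pw A i))" unfolding ore_Kalg_def by auto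
  have "M A Q = (\<Sum>i\<le>m. smult [:c i:] (pw A (Suc i)))"
    unfolding Q M_sum_right by (simp add: M_smult_const_right pw_Suc)
  moreover have "M Q A = (\<Sum>i\<le>m. smult [:c i:] (pw A (Suc i)))"
    unfolding Q M_sum_left by (simp add: M_smult_left pw_comm)
  ultimately show "Q \<in> C A" unfolding ore_centralizer_def by simp
qed

lemma K_0: "0 \<in> K A"
  unfolding ore_Kalg_def by (rule CollectI, rule exI[of _ "\<lambda>_. 0"], rule exI[of _ 0]) simp

lemma K_add: assumes "Q \<in> K A" shows "Q + smult [:c:] (pw A k) \<in> K A"
proof -
  obtain c' m where Q: "Q = (\<Sum>i\<le>m. smult [:c' i:] (pw A i))" using assms unfolding ore_Kalg_def by auto
  define N where "N = max m k"
  define c'' where "c'' i = (if i \<le> m then c' i else 0) + (if i = k then c else 0)" for i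
  have sm: "smult [:a + b:] x = smult [:a:] x + smult [:b:] x" for a b and x :: "'a poly poly"
    by (metis add_pCons pCons_0_0 add_0 smult_add_left)
  have "(\<Sum>i\<le>N. smult [:c'' i:] (pw A i)) =
     (\<Sum>i\<le>N. smult [:if i \<le> m then c' i else 0:] (pw A i)) + (\<Sum>i\<le>N. smult [:if i = k then c else 0:] (pw A i))"
    unfolding c''_def sm sum.distrib ..
  also have "(\<Sum>i\<le>N. smult [:if i \<le> m then c' i else 0:] (pw A i)) = (\<Sum>i\<le>m. smult [:if i \<le> m then c' i else 0:] (pw A i))"
    by (rule sum.mono_neutral_right) (auto simp: N_def)
  also have "\<dots> = Q" unfolding Q by (rule sum.cong) auto
  also have "(\<Sum>i\<le>N. smult [:if i = k then c else 0:] (pw A i)) = (\<Sum>i\<le>N. if i = k then smult [:c:] (pw A i) else 0)"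
    by (rule sum.cong) auto
  also have "\<dots> = smult [:c:] (pw A k)" by (simp add: N_def)
  finally have "Q + smult [:c:] (pw A k) = (\<Sum>i\<le>N. smult [:c'' i:] (pw A i))" by simp
  then show ?thesis unfolding ore_Kalg_def by blast
qed

abbreviation PP :: "nat \<Rightarrow> 'a poly poly" where "PP n \<equiv> monom (monom 1 n) n"

lemma PP_props: "PP n \<noteq> 0" "degree (PP n) = n" "lead_coeff (PP n) = monom 1 n"
  by (simp_all add: degree_monom_eq)

lemma key_eq: assumes "R \<in> C (PP n)" "R \<noteq> 0"
  shows "monom 1 n * (\<sigma>^^n) (lead_coeff R) = lead_coeff R * (\<sigma>^^(degree R)) (monom 1 n)"
proof -
  have "M (PP n) R = M R (PP n)" using assms(1) unfolding ore_centralizer_def by simp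
  then have "lead_coeff (M (PP n) R) = lead_coeff (M R (PP n))" by simp
  moreover have l1: "lead_coeff (M (PP n) R) = monom 1 n * (\<sigma>^^n) (lead_coeff R)"
    using conjunct2[OF M_lead[OF PP_props(1) assms(2)]] unfolding PP_props(3) unfolding PP_props(2) .
  moreover have l2: "lead_coeff (M R (PP n)) = lead_coeff R * (\<sigma>^^(degree R)) (monom 1 n)"
    using conjunct2[OF M_lead[OF assms(2) PP_props(1)]] unfolding PP_props(3) .
  ultimately show ?thesis by metis
qed

lemma deg_eq: assumes "f \<noteq> 0" "monom 1 n * (\<sigma>^^n) f = f * (\<sigma>^^m) (monom 1 n)"
  shows "n + degree f * degree tt ^ n = degree f + n * degree tt ^ m"
proof -
  have "degree (monom (1::'a) n * (\<sigma>^^n) f) = n + degree f * degree tt ^ n"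
    using assms(1) S_nz[of f n] by (simp add: degree_mult_eq degree_monom_eq degree_S)
  moreover have "degree (f * (\<sigma>^^m) (monom 1 n)) = degree f + n * degree tt ^ m"
    using assms(1) S_nz[of "monom 1 n" m] by (simp add: degree_mult_eq degree_monom_eq degree_S)
  ultimately show ?thesis using assms(2) by simp
qed


lemma C_sub_K: assumes n: "n > 0" shows "Q \<in> C (PP n) \<Longrightarrow> Q \<in> K (PP n)"
proof (induct "degree Q" arbitrary: Q rule: less_induct)
  case less
  show ?case
  proof (cases "Q = 0")
    case True then show ?thesis using K_0 by simp
  next
    case False
    define m where "m = degree Q"
    define q where "q = lead_coeff Q"
    define d where "d = degree tt"
    have d2: "d \<ge> 2" using deg_tt d_def by simp
    have qnz: "q \<noteq> 0" using False q_def by simp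
    have Eq: "monom 1 n * (\<sigma>^^n) q = q * (\<sigma>^^m) (monom 1 n)"
      using key_eq[OF less(2) False] q_def m_def by simp
    have De: "n + degree q * d^n = degree q + n * d^m" using deg_eq[OF qnz Eq] d_def by simp
    have dn1: "d^n > 1"
    proof -
      have "d^n \<ge> d^1" using n d2 by (intro power_increasing) auto
      then show ?thesis using d2 by simp
    qed
    have dm1: "d^m \<ge> 1" using d2 by simp
    have "(d^n - 1) dvd n * (d^m - 1)"
    proof -
      have De': "int n + int (degree q) * int d ^ n = int (degree q) + int n * int d ^ m"
        using De by (metis of_nat_add of_nat_mult of_nat_power)
      have "int (n * (d^m - 1)) = int ((d^n - 1) * degree q)"
        using De' dn1 dm1 by (simp add: of_nat_diff algebra_simps)
      then have "n * (d^m - 1) = (d^n - 1) * degree q" by (simp only: of_nat_eq_iff)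
      then show ?thesis by simp
    qed
    then have "n dvd m" using nt_main d2 n by blast
    then obtain k where mk: "m = n * k" ..
    define R where "R = pw (PP n) k"
    have Rnz: "R \<noteq> 0" and Rdeg: "degree R = m"
      using pw_deg[of "PP n" k] PP_props[of n] mk unfolding R_def by (auto simp: mult.commute)
    define p where "p = lead_coeff R"
    have pnz: "p \<noteq> 0" using Rnz p_def by simp
    have RC: "R \<in> C (PP n)" unfolding R_def by (rule pw_C)
    have EqR: "monom 1 n * (\<sigma>^^n) p = p * (\<sigma>^^m) (monom 1 n)"
      using key_eq[OF RC Rnz] Rdeg p_def by simp
    have uniq: "degree f = degree q"
      if f: "f \<noteq> 0" "monom 1 n * (\<sigma>^^n) f = f * (\<sigma>^^m) (monom 1 n)" for f
    proof -
      have Df: "n + degree f * d^n = degree f + n * d^m" using deg_eq[OF f] d_def by simp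
      have "int n + int (degree f) * int (d^n) = int (degree f) + int n * int (d^m)"
        using Df by (metis of_nat_add of_nat_mult)
      moreover have "int n + int (degree q) * int (d^n) = int (degree q) + int n * int (d^m)"
        using De by (metis of_nat_add of_nat_mult)
      ultimately have "(int (degree f) - int (degree q)) * (int (d^n) - 1) = 0"
        by (simp add: algebra_simps)
      moreover have "int (d^n) \<noteq> 1" using dn1 by linarith
      ultimately show ?thesis by simp
    qed
    have pq: "degree p = degree q" by (rule uniq[OF pnz EqR])
    define c where "c = lead_coeff q / lead_coeff p"
    define r where "r = q - smult c p"
    have Er: "monom 1 n * (\<sigma>^^n) r = r * (\<sigma>^^m) (monom 1 n)"
    proof -
      have "monom 1 n * (\<sigma>^^n) r = monom 1 n * (\<sigma>^^n) q - smult c (monom 1 n * (\<sigma>^^n) p)"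
        unfolding r_def S_diff S_smult by (simp add: algebra_simps)
      also have "\<dots> = r * (\<sigma>^^m) (monom 1 n)"
        unfolding Eq EqR r_def by (simp add: algebra_simps)
      finally show ?thesis .
    qed
    have "r = 0"
    proof (rule ccontr)
      assume rnz: "r \<noteq> 0"
      have "degree r = degree q" by (rule uniq[OF rnz Er])
      moreover have "coeff r (degree q) = 0"
      proof -
        have "coeff p (degree q) \<noteq> 0" using pq pnz by (metis leading_coeff_0_iff)
        then show ?thesis unfolding r_def c_def using pq by simp
      qed
      ultimately show False using rnz by (metis leading_coeff_0_iff)
    qed
    then have qp: "q = smult c p" unfolding r_def by simp
    define Q' where "Q' = Q - smult [:c:] R"
    have Q'C: "Q' \<in> C (PP n)" using less(2) RC unfolding Q'_def ore_centralizer_def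
      by (simp add: M_diff_left M_diff_right M_smult_const_right M_smult_left)
    have dQ': "degree Q' \<le> m" unfolding Q'_def using Rdeg m_def
      by (intro degree_diff_le) (auto intro: order.trans[OF degree_smult_le])
    moreover have "coeff Q' m = 0" unfolding Q'_def using qp q_def p_def Rdeg m_def by simp
    ultimately have "Q' = 0 \<or> degree Q' < m"
      by (metis leading_coeff_0_iff le_neq_implies_less)
    then have "Q' \<in> K (PP n)" using less(1) Q'C K_0 m_def by auto
    then have "Q' + smult [:c:] R \<in> K (PP n)" unfolding R_def by (rule K_add)
    then show ?thesis unfolding Q'_def by simp
  qed
qed

theorem main: "n > 0 \<Longrightarrow> C (PP n) = K (PP n)"
  using C_sub_K K_sub_C by blast

end

theorem corollary5p7:
  fixes \<sigma> \<delta> :: "'a::field poly \<Rightarrow> 'a poly" and n :: nat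
  assumes sigma_add: "\<And>a b. \<sigma> (a + b) = \<sigma> a + \<sigma> b"
      and sigma_mult: "\<And>a b. \<sigma> (a * b) = \<sigma> a * \<sigma> b"
      and sigma_one: "\<sigma> 1 = 1"
      and sigma_smult: "\<And>c a. \<sigma> (smult c a) = smult c (\<sigma> a)"
      and sigma_deg: "degree (\<sigma> [:0, 1:]) > 1"
      and delta_add: "\<And>a b. \<delta> (a + b) = \<delta> a + \<delta> b"
      and delta_smult: "\<And>c a. \<delta> (smult c a) = smult c (\<delta> a)"
      and delta_mult: "\<And>a b. \<delta> (a * b) = \<sigma> a * \<delta> b + \<delta> a * b"
      and n_pos: "n > 0"
  shows "ore_centralizer \<sigma> \<delta> (monom (monom 1 n) n) = ore_Kalg \<sigma> \<delta> (monom (monom 1 n) n)"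
proof -
  interpret ore \<sigma> \<delta>
    by unfold_locales (fact assms)+
  show ?thesis using main[OF n_pos] .
qed

end
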